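(* Let $Y$ be a random variable whose moment generating function $E[e^{tY}]$ exists for $|t|<r_0$ for some $r_0>0$. Let $(Y_j)_{j\ge1}$ be mutually independent copies of $Y$, $S_0=0$, $S_k=Y_1+\cdots+Y_k$ for $k\ge1$. Let $r$ be a positive integer and let $$\phi_{n,r}^Y(x)=\sum_{k=0}^{n}{n+r\brace k+r}_{r,Y}x^k,\qquad {n+r\brace k+r}_{r,Y}=\frac{1}{k!}\sum_{j=0}^{k}\binom{k}{j}(-1)^{k-j}E\big[(S_j+r)^n\big].$$ Then for all integers $m,n\ge0$, $$\phi_{m+n,r}^Y(x)=\sum_{i=0}^{n}\sum_{k=0}^{m}\binom{n}{i}\phi_{i,r}^Y(x)x^k\frac{1}{k!}\sum_{j=k}^{m}\binom{m}{j}\sum_{l_1+\cdots+l_k=j}\binom{j}{l_1,\dots,l_k}r^{m-j}E\Big[S_k^{n-i}\prod_{p=1}^{k}Y_p^{l_p}\Big],$$ where the innermost sum runs over $k$-tuples $(l_1,\dots,l_k)$ of positive integers with sum $j$.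
   Context: $\phi_{n,r}^Y(x)$ are the probabilistic $r$-Bell polynomials associated with $Y$. For $k=0$ the sum over $(l_1,\dots,l_k)$ equals $1$ if $j=0$ and $0$ otherwise (empty product equal to $1$). $\binom{j}{l_1,\dots,l_k}$ is the multinomial coefficient. *)

theory Defs
  imports "HOL-Probability.Probability"
begin

definition partial_sum :: "(nat \<Rightarrow> 'a \<Rightarrow> real) \<Rightarrow> nat \<Rightarrow> 'a \<Rightarrow> real" where
  "partial_sum Ys k \<omega> = (\<Sum>p\<in>{1..k}. Ys p \<omega>)"

definition prob_r_stirling :: "'a measure \<Rightarrow> (nat \<Rightarrow> 'a \<Rightarrow> real) \<Rightarrow> nat \<Rightarrow> nat \<Rightarrow> nat \<Rightarrow> real" where
  "prob_r_stirling M Ys r n k =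
     (1 / fact k) * (\<Sum>j=0..k. real (k choose j) * (-1) ^ (k - j) *
        integral\<^sup>L M (\<lambda>\<omega>. (partial_sum Ys j \<omega> + real r) ^ n))"

definition prob_r_bell :: "'a measure \<Rightarrow> (nat \<Rightarrow> 'a \<Rightarrow> real) \<Rightarrow> nat \<Rightarrow> nat \<Rightarrow> real \<Rightarrow> real" where
  "prob_r_bell M Ys r n x = (\<Sum>k=0..n. prob_r_stirling M Ys r n k * x ^ k)"

definition compositions :: "nat \<Rightarrow> nat \<Rightarrow> (nat \<Rightarrow> nat) set" where
  "compositions k j = {l \<in> {1..k} \<rightarrow>\<^sub>E {1..j}. (\<Sum>p\<in>{1..k}. l p) = j}"

definition multinom :: "nat \<Rightarrow> nat \<Rightarrow> (nat \<Rightarrow> nat) \<Rightarrow> real" where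
  "multinom j k l = fact j / (\<Prod>p\<in>{1..k}. fact (l p))"

end

theory Submission
  imports Defs
begin


lemma pow_le_exp: assumes "(x::real) \<ge> 0" shows "x ^ n / fact n \<le> exp x"
proof -
  have s: "(\<lambda>i. x^i / fact i) sums exp x" using exp_converges[of x] by (simp add: divide_inverse mult.commute)
  have "x^n/fact n = (\<Sum>i\<in>{n}. x^i/fact i)" by simp
  also have "\<dots> \<le> (\<Sum>i. x^i/fact i)"
    by (rule sum_le_suminf) (use s assms in \<open>auto simp: sums_iff\<close>)
  also have "\<dots> = exp x" using s by (simp add: sums_iff)
  finally show ?thesis .
qed

lemma binom2_expand:
  fixes u v :: real
  shows "(u+v)^(a+b) = (\<Sum>a1\<le>a. \<Sum>b1\<le>b. real (a choose a1) * real (b choose b1) *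
            (u^(a1+b1) * v^((a-a1)+(b-b1))))"
  apply (simp add: power_add binomial_ring sum_product)
  apply (intro sum.cong refl)
  apply (simp add: power_add[symmetric] algebra_simps)
  done

lemma nth2_mult: "fps_nth (fps_nth (F * G) b) a =
  (\<Sum>b1\<le>b. \<Sum>a1\<le>a. fps_nth (fps_nth F b1) a1 * fps_nth (fps_nth G (b-b1)) (a-a1))"
  for F G :: "'a::comm_ring_1 fps fps"
  by (simp add: fps_mult_nth fps_sum_nth atLeast0AtMost)

lemma order_zero: "fps_nth F 0 = 0 \<Longrightarrow> b < k \<Longrightarrow> fps_nth (F^k) b = (0::'a::comm_ring_1)"
proof (induction k arbitrary: b)
  case 0 then show ?case by simp
next
  case (Suc k)
  have "fps_nth (F^Suc k) b = (\<Sum>i=0..b. fps_nth F i * fps_nth (F^k) (b - i))"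
    by (simp add: fps_mult_nth)
  also have "\<dots> = 0"
  proof (intro sum.neutral ballI)
    fix i assume "i \<in> {0..b}"
    show "fps_nth F i * fps_nth (F^k) (b - i) = 0"
    proof (cases "i = 0")
      case True then show ?thesis using Suc.prems by simp
    next
      case False
      have "b - i < k" using \<open>i \<in> {0..b}\<close> False Suc.prems by auto
      then show ?thesis using Suc.prems Suc.IH[of "b - i"] by simp
    qed
  qed
  finally show ?case .
qed

lemma order_zero_mult: "fps_nth F 0 = 0 \<Longrightarrow> b < k \<Longrightarrow> fps_nth (G * F^k) b = (0::'a::comm_ring_1)"
  by (auto simp: fps_mult_nth order_zero intro!: sum.neutral)

lemma fps_const_prod: "(\<Prod>p\<in>A. fps_const (g p)) = fps_const (\<Prod>p\<in>A. g p)"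
  by (induction A rule: infinite_finite_induct) auto

definition Cset :: "nat \<Rightarrow> nat \<Rightarrow> (nat \<Rightarrow> nat) set" where
  "Cset k j = {l \<in> {1..k} \<rightarrow>\<^sub>E {0..j}. (\<Sum>p\<in>{1..k}. l p) = j}"

lemma Cset_finite: "finite (Cset k j)"
  unfolding Cset_def by (rule finite_subset[of _ "{1..k} \<rightarrow>\<^sub>E {0..j}"]) (auto intro: finite_PiE)

lemma prod_coeff:
  fixes F :: "nat \<Rightarrow> 'a::comm_ring_1 fps"
  shows "fps_nth (\<Prod>p\<in>{1..k}. F p) j = (\<Sum>l\<in>Cset k j. \<Prod>p\<in>{1..k}. fps_nth (F p) (l p))"
proof (induction k arbitrary: j)
  case 0
  have "Cset 0 j = (if j = 0 then {\<lambda>_. undefined} else {})"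
    by (auto simp: Cset_def)
  then show ?case by simp
next
  case (Suc k)
  have "fps_nth (\<Prod>p\<in>{1..Suc k}. F p) j = fps_nth ((\<Prod>p\<in>{1..k}. F p) * F (Suc k)) j"
    by simp
  also have "\<dots> = (\<Sum>i\<le>j. \<Sum>l\<in>Cset k i. (\<Prod>p\<in>{1..k}. fps_nth (F p) (l p)) * fps_nth (F (Suc k)) (j - i))"
    unfolding fps_mult_nth Suc.IH by (simp add: sum_distrib_right atLeast0AtMost)
  also have "\<dots> = (\<Sum>(i,l)\<in>Sigma {..j} (Cset k). (\<Prod>p\<in>{1..k}. fps_nth (F p) (l p)) * fps_nth (F (Suc k)) (j - i))"
    by (rule sum.Sigma) (auto simp: Cset_finite)
  also have "\<dots> = (\<Sum>l\<in>Cset (Suc k) j. \<Prod>p\<in>{1..Suc k}. fps_nth (F p) (l p))"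
  proof (rule sum.reindex_bij_witness[where j="\<lambda>(i,l). l(Suc k := j - i)" and i="\<lambda>l. (j - l (Suc k), l(Suc k := undefined))"], goal_cases)
    case (1 a)
    obtain i l where [simp]: "a = (i, l)" by (cases a)
    from 1 have i: "i \<le> j" and l: "l \<in> {1..k} \<rightarrow>\<^sub>E {0..i}"
      by (auto simp: Cset_def)
    have lS: "l (Suc k) = undefined" using l(1) by (auto simp: PiE_def extensional_def)
    show ?case using i lS by (auto simp: fun_eq_iff)
  next
    case (2 a)
    obtain i l where [simp]: "a = (i, l)" by (cases a)
    from 2 have i: "i \<le> j" and l: "l \<in> {1..k} \<rightarrow>\<^sub>E {0..i}" "(\<Sum>p\<in>{1..k}. l p) = i"
      by (auto simp: Cset_def)
    have sumeq: "(\<Sum>p\<in>{1..k}. (l(Suc k := v)) p) = i" for v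
      using l(2) by (intro trans[OF sum.cong l(2)]) auto
    show ?case
      using i l sumeq[of "j - i"] by (auto simp: Cset_def PiE_def extensional_def Pi_def atLeastAtMostSuc_conv)
  next
    case (3 l)
    then have l2: "(\<Sum>p\<in>{1..Suc k}. l p) = j"
      by (auto simp: Cset_def)
    have s: "(\<Sum>p\<in>{1..k}. l p) + l (Suc k) = j" using l2 by simp
    show ?case using s by (auto simp: fun_eq_iff)
  next
    case (4 l)
    then have l1: "l \<in> {1..Suc k} \<rightarrow>\<^sub>E {0..j}" and l2: "(\<Sum>p\<in>{1..Suc k}. l p) = j"
      by (auto simp: Cset_def)
    have s: "(\<Sum>p\<in>{1..k}. l p) + l (Suc k) = j" using l2 by simp
    have s2: "(\<Sum>p\<in>{1..k}. (l(Suc k := undefined)) p) = (\<Sum>p\<in>{1..k}. l p)"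
      by (intro sum.cong) auto
    have "l p \<le> (\<Sum>p\<in>{1..k}. l p)" if "p \<in> {1..k}" for p
      using that by (intro member_le_sum) auto
    then show ?case
      using l1 s s2 by (auto simp: Cset_def PiE_def extensional_def Pi_def)
  next
    case (5 a)
    obtain i l where [simp]: "a = (i, l)" by (cases a)
    show ?case by (auto intro!: prod.cong)
  qed
  finally show ?case .
qed


lemma pow_coeff_comp:
  fixes F :: "'a::comm_ring_1 fps"
  assumes "fps_nth F 0 = 0"
  shows "fps_nth (F^k) j = (\<Sum>l\<in>compositions k j. \<Prod>p\<in>{1..k}. fps_nth F (l p))"
proof -
  have "F^k = (\<Prod>p\<in>{1..k}. F)" by simp
  then have "fps_nth (F^k) j = (\<Sum>l\<in>Cset k j. \<Prod>p\<in>{1..k}. fps_nth F (l p))"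
    using prod_coeff[of "\<lambda>_. F" k j] by simp
  also have "\<dots> = (\<Sum>l\<in>compositions k j. \<Prod>p\<in>{1..k}. fps_nth F (l p))"
  proof (rule sum.mono_neutral_right[OF Cset_finite])
    show "compositions k j \<subseteq> Cset k j"
      by (auto simp: compositions_def Cset_def PiE_def Pi_def)
    show "\<forall>l\<in>Cset k j - compositions k j. (\<Prod>p\<in>{1..k}. fps_nth F (l p)) = 0"
    proof
      fix l assume l: "l \<in> Cset k j - compositions k j"
      then obtain p where p: "p \<in> {1..k}" "l p \<notin> {1..j}"
        by (auto simp: compositions_def Cset_def PiE_def Pi_def)
      with l have "l p = 0" by (auto simp: Cset_def PiE_def Pi_def)
      then show "(\<Prod>p\<in>{1..k}. fps_nth F (l p)) = 0"
        using p assms by (intro prod_zero bexI[where x=p]) auto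
    qed
  qed
  finally show ?thesis .
qed

locale bellctx =
  fixes M :: "'a measure" and Y :: "'a \<Rightarrow> real" and Ys :: "nat \<Rightarrow> 'a \<Rightarrow> real" and r0 :: real
  assumes PS: "prob_space M" and Ymeas: "Y \<in> borel_measurable M" and r0: "r0 > 0"
    and mgf: "\<And>t. \<bar>t\<bar> < r0 \<Longrightarrow> integrable M (\<lambda>\<omega>. exp (t * Y \<omega>))"
    and ind: "prob_space.indep_vars M (\<lambda>_. borel) Ys {1..}"
    and dis: "\<And>j. j \<ge> 1 \<Longrightarrow> distr M borel (Ys j) = distr M borel Y"
begin

sublocale prob_space M by (rule PS)

lemma Y_int: "integrable M (\<lambda>\<omega>. Y \<omega> ^ a)"
proof -
  define t where "t = r0 / 2"
  have t: "t > 0" "\<bar>t\<bar> < r0" "\<bar>-t\<bar> < r0" using r0 by (auto simp: t_def)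
  have i: "integrable M (\<lambda>\<omega>. fact a / t^a * (exp (t * Y \<omega>) + exp ((-t) * Y \<omega>)))"
    using mgf[OF t(2)] mgf[OF t(3)] by auto
  show ?thesis
  proof (rule Bochner_Integration.integrable_bound[OF i])
    show "(\<lambda>\<omega>. Y \<omega> ^ a) \<in> borel_measurable M" using Ymeas by measurable
    show "AE \<omega> in M. norm (Y \<omega> ^ a) \<le> norm (fact a / t^a * (exp (t * Y \<omega>) + exp ((-t) * Y \<omega>)))"
    proof (rule AE_I2)
      fix \<omega>
      have "(t * \<bar>Y \<omega>\<bar>)^a / fact a \<le> exp (t * \<bar>Y \<omega>\<bar>)"
        using t by (intro pow_le_exp) auto
      also have "\<dots> \<le> exp (t * Y \<omega>) + exp ((-t) * Y \<omega>)"
        by (cases "Y \<omega> \<ge> 0") auto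
      finally have "t^a * \<bar>Y \<omega>\<bar>^a \<le> fact a * (exp (t * Y \<omega>) + exp ((-t) * Y \<omega>))"
        by (simp add: power_mult_distrib divide_le_eq mult.commute)
      then have "\<bar>Y \<omega>\<bar>^a \<le> fact a / t^a * (exp (t * Y \<omega>) + exp ((-t) * Y \<omega>))"
        using t by (simp add: field_simps)
      then have "\<bar>Y \<omega>\<bar>^a \<le> fact a / \<bar>t\<bar>^a * (exp (t * Y \<omega>) + exp ((-t) * Y \<omega>))"
        using t by simp
      then show "norm (Y \<omega> ^ a) \<le> norm (fact a / t^a * (exp (t * Y \<omega>) + exp ((-t) * Y \<omega>)))"
        by (simp add: power_abs)
    qed
  qed
qed

lemma Ys_meas: "p \<ge> 1 \<Longrightarrow> Ys p \<in> borel_measurable M"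
  using ind unfolding indep_vars_def by auto

definition mu :: "nat \<Rightarrow> real" where "mu a = integral\<^sup>L M (\<lambda>\<omega>. Y \<omega> ^ a)"

lemma Ys_pow: assumes "p \<ge> 1"
  shows "integrable M (\<lambda>\<omega>. Ys p \<omega> ^ a)" "integral\<^sup>L M (\<lambda>\<omega>. Ys p \<omega> ^ a) = mu a"
proof -
  have g: "(\<lambda>y::real. y ^ a) \<in> borel_measurable borel" by measurable
  have "integrable (distr M borel (Ys p)) (\<lambda>y. y ^ a) = integrable (distr M borel Y) (\<lambda>y. y ^ a)"
    using dis[OF assms] by simp
  then show "integrable M (\<lambda>\<omega>. Ys p \<omega> ^ a)"
    using integrable_distr_eq[OF Ys_meas[OF assms] g] integrable_distr_eq[OF Ymeas g] Y_int by simp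
  have "integral\<^sup>L (distr M borel (Ys p)) (\<lambda>y. y ^ a) = integral\<^sup>L (distr M borel Y) (\<lambda>y. y ^ a)"
    using dis[OF assms] by simp
  then show "integral\<^sup>L M (\<lambda>\<omega>. Ys p \<omega> ^ a) = mu a"
    using integral_distr[OF Ys_meas[OF assms] g] integral_distr[OF Ymeas g] unfolding mu_def by simp
qed

lemma indep_block:
  "indep_var borel (\<lambda>\<omega>. (partial_sum Ys j \<omega> + c)^i * (\<Prod>p\<in>{1..j}. Ys p \<omega> ^ l p))
             borel (\<lambda>\<omega>. Ys (Suc j) \<omega> ^ q)"
proof -
  have "indep_var (PiM {1..j} (\<lambda>_. borel)) (\<lambda>\<omega>. restrict (\<lambda>p. Ys p \<omega>) {1..j})
                  (PiM {Suc j} (\<lambda>_. borel)) (\<lambda>\<omega>. restrict (\<lambda>p. Ys p \<omega>) {Suc j})"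
    by (rule indep_var_restrict[OF ind]) auto
  moreover have "(\<lambda>w. ((\<Sum>p\<in>{1..j}. w p) + c)^i * (\<Prod>p\<in>{1..j}. w p ^ l p)) \<in> borel_measurable (PiM {1..j} (\<lambda>_. borel))"
    by measurable
  moreover have "(\<lambda>w. w (Suc j) ^ q) \<in> borel_measurable (PiM {Suc j} (\<lambda>_. borel :: real measure))"
    by measurable
  ultimately have "indep_var borel ((\<lambda>w. ((\<Sum>p\<in>{1..j}. w p) + c)^i * (\<Prod>p\<in>{1..j}. w p ^ l p)) \<circ> (\<lambda>\<omega>. restrict (\<lambda>p. Ys p \<omega>) {1..j}))
     borel ((\<lambda>w. w (Suc j) ^ q) \<circ> (\<lambda>\<omega>. restrict (\<lambda>p. Ys p \<omega>) {Suc j}))"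
    by (rule indep_var_compose)
  then show ?thesis by (simp add: comp_def partial_sum_def)
qed


definition pt :: "nat \<Rightarrow> real \<Rightarrow> (nat \<Rightarrow> nat) \<Rightarrow> nat \<Rightarrow> 'a \<Rightarrow> real" where
  "pt j c l N \<omega> = (partial_sum Ys j \<omega> + c)^N * (\<Prod>p\<in>{1..j}. Ys p \<omega> ^ l p)"

lemma ps_Suc: "partial_sum Ys (Suc j) \<omega> = partial_sum Ys j \<omega> + Ys (Suc j) \<omega>"
  by (simp add: partial_sum_def)

lemma pt_Suc: "pt (Suc j) c l N \<omega> =
   (\<Sum>i\<le>N. real (N choose i) * (pt j c l i \<omega> * Ys (Suc j) \<omega> ^ (N - i + l (Suc j))))"
proof -
  have "pt (Suc j) c l N \<omega> = ((partial_sum Ys j \<omega> + c) + Ys (Suc j) \<omega>)^N *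
          ((\<Prod>p\<in>{1..j}. Ys p \<omega> ^ l p) * Ys (Suc j) \<omega> ^ l (Suc j))"
    by (simp add: pt_def ps_Suc algebra_simps)
  also have "\<dots> = (\<Sum>i\<le>N. real (N choose i) * (pt j c l i \<omega> * Ys (Suc j) \<omega> ^ (N - i + l (Suc j))))"
    unfolding binomial_ring[of "partial_sum Ys j \<omega> + c" "Ys (Suc j) \<omega>" N] sum_distrib_right
  proof (intro sum.cong refl)
    fix i assume "i \<in> {..N}"
    show "real (N choose i) * (partial_sum Ys j \<omega> + c) ^ i * Ys (Suc j) \<omega> ^ (N - i) *
         ((\<Prod>p = 1..j. Ys p \<omega> ^ l p) * Ys (Suc j) \<omega> ^ l (Suc j)) =
         real (N choose i) * (pt j c l i \<omega> * Ys (Suc j) \<omega> ^ (N - i + l (Suc j)))"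
      using power_add[of "Ys (Suc j) \<omega>" "N - i" "l (Suc j)"] by (simp add: pt_def algebra_simps)
  qed
  finally show ?thesis .
qed

lemma indep_pt: "indep_var borel (pt j c l i) borel (\<lambda>\<omega>. Ys (Suc j) \<omega> ^ q)"
  using indep_block[of j c i l q] unfolding pt_def[abs_def] by simp

lemma pt_int: "integrable M (pt j c l N)"
proof (induction j arbitrary: N)
  case 0
  then show ?case by (simp add: pt_def partial_sum_def)
next
  case (Suc j)
  have "integrable M (\<lambda>\<omega>. pt j c l i \<omega> * Ys (Suc j) \<omega> ^ q)" for i q
    by (rule indep_var_integrable[OF indep_pt Suc.IH Ys_pow(1)]) simp
  then show ?case by (subst pt_Suc[abs_def]) auto
qed

lemma pt_rec: "integral\<^sup>L M (pt (Suc j) c l N) =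
   (\<Sum>i\<le>N. real (N choose i) * (integral\<^sup>L M (pt j c l i) * mu (N - i + l (Suc j))))"
proof -
  have i: "integrable M (\<lambda>\<omega>. pt j c l i \<omega> * Ys (Suc j) \<omega> ^ q)" for i q
    by (rule indep_var_integrable[OF indep_pt pt_int Ys_pow(1)]) simp
  have e: "integral\<^sup>L M (\<lambda>\<omega>. pt j c l i \<omega> * Ys (Suc j) \<omega> ^ q) = integral\<^sup>L M (pt j c l i) * mu q" for i q
    using indep_var_lebesgue_integral[OF indep_pt pt_int Ys_pow(1)] Ys_pow(2) by simp
  show ?thesis
    by (subst pt_Suc[abs_def]) (simp add: integral_sum i e)
qed

definition Mf :: "real fps" where "Mf = Abs_fps (\<lambda>a. mu a / fact a)"
definition Dl :: "nat \<Rightarrow> real fps" where "Dl c = Abs_fps (\<lambda>a. mu (a + c) / fact a)"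
definition M2 :: "real fps fps" where "M2 = Abs_fps (\<lambda>b. Abs_fps (\<lambda>a. mu (a + b) / (fact a * fact b)))"
definition E2 :: "real \<Rightarrow> real fps fps" where "E2 c = Abs_fps (\<lambda>b. Abs_fps (\<lambda>a. c ^ (a + b) / (fact a * fact b)))"

lemma claimB: "fps_nth (\<Prod>p\<in>{1..k}. Dl (l p)) a = integral\<^sup>L M (pt k 0 l a) / fact a"
proof (induction k arbitrary: a)
  case 0
  then show ?case by (simp add: pt_def partial_sum_def Dl_def prob_space.prob_space[OF PS])
next
  case (Suc k)
  have "fps_nth (\<Prod>p\<in>{1..Suc k}. Dl (l p)) a = fps_nth ((\<Prod>p\<in>{1..k}. Dl (l p)) * Dl (l (Suc k))) a"
    by simp
  also have "\<dots> = (\<Sum>i\<le>a. integral\<^sup>L M (pt k 0 l i) / fact i * (mu (a - i + l (Suc k)) / fact (a - i)))"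
    unfolding fps_mult_nth Suc.IH by (simp add: Dl_def atLeast0AtMost)
  also have "\<dots> = (\<Sum>i\<le>a. real (a choose i) * (integral\<^sup>L M (pt k 0 l i) * mu (a - i + l (Suc k)))) / fact a"
    unfolding sum_divide_distrib
    by (intro sum.cong refl) (simp add: binomial_fact field_simps)
  also have "\<dots> = integral\<^sup>L M (pt (Suc k) 0 l a) / fact a"
    by (simp add: pt_rec)
  finally show ?case .
qed

lemma claimBi: "fps_nth (fps_nth (E2 c * M2 ^ j) b) a = integral\<^sup>L M (\<lambda>\<omega>. (partial_sum Ys j \<omega> + c) ^ (a + b)) / (fact a * fact b)"
proof (induction j arbitrary: a b)
  case 0
  then show ?case by (simp add: partial_sum_def E2_def prob_space.prob_space[OF PS])
next
  case (Suc j)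
  let ?u = "\<lambda>\<omega>. partial_sum Ys j \<omega> + c"
  have ptu: "pt j c (\<lambda>_. 0) N = (\<lambda>\<omega>. ?u \<omega> ^ N)" for N by (simp add: pt_def fun_eq_iff)
  have i: "integrable M (\<lambda>\<omega>. ?u \<omega> ^ N * Ys (Suc j) \<omega> ^ q)" for N q
    using indep_var_integrable[OF indep_pt[of j c "\<lambda>_. 0" N q] pt_int Ys_pow(1)[of "Suc j" q]] by (simp add: ptu)
  have e: "integral\<^sup>L M (\<lambda>\<omega>. ?u \<omega> ^ N * Ys (Suc j) \<omega> ^ q) = integral\<^sup>L M (\<lambda>\<omega>. ?u \<omega> ^ N) * mu q" for N q
    using indep_var_lebesgue_integral[OF indep_pt[of j c "\<lambda>_. 0" N q] pt_int Ys_pow(1)[of "Suc j" q]] Ys_pow(2)[of "Suc j" q]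
    by (simp add: ptu)
  have "fps_nth (fps_nth (E2 c * M2 ^ Suc j) b) a = fps_nth (fps_nth ((E2 c * M2 ^ j) * M2) b) a"
    by (simp only: power_Suc2 mult.assoc)
  also have "\<dots> = (\<Sum>b1\<le>b. \<Sum>a1\<le>a. integral\<^sup>L M (\<lambda>\<omega>. ?u \<omega> ^ (a1 + b1)) / (fact a1 * fact b1) *
                    (mu ((a - a1) + (b - b1)) / (fact (a - a1) * fact (b - b1))))"
    unfolding nth2_mult[of "E2 c * M2 ^ j" M2] Suc.IH by (simp add: M2_def)
  also have "\<dots> = (\<Sum>a1\<le>a. \<Sum>b1\<le>b. real (a choose a1) * real (b choose b1) *
            (integral\<^sup>L M (\<lambda>\<omega>. ?u \<omega> ^ (a1 + b1)) * mu ((a - a1) + (b - b1)))) / (fact a * fact b)"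
    apply (subst sum.swap)
    unfolding sum_divide_distrib
    by (intro sum.cong refl) (simp add: binomial_fact field_simps)
  also have "\<dots> = integral\<^sup>L M (\<lambda>\<omega>. (partial_sum Ys (Suc j) \<omega> + c) ^ (a + b)) / (fact a * fact b)"
  proof -
    have "(\<lambda>\<omega>. (partial_sum Ys (Suc j) \<omega> + c)^(a+b)) = (\<lambda>\<omega>. (?u \<omega> + Ys (Suc j) \<omega>)^(a+b))"
      by (simp add: ps_Suc algebra_simps)
    also have "\<dots> = (\<lambda>\<omega>. \<Sum>a1\<le>a. \<Sum>b1\<le>b. real (a choose a1) * real (b choose b1) *
            (?u \<omega> ^ (a1+b1) * Ys (Suc j) \<omega> ^ ((a-a1)+(b-b1))))"
      by (rule ext) (rule binom2_expand)
    finally show ?thesis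
      by (simp add: i e integral_sum sum_divide_distrib del: diff_add_eq_diff_diff_swap)
  qed
  finally show ?case .
qed


lemma mu0: "mu 0 = 1"
  by (simp add: mu_def prob_space.prob_space[OF PS])

lemma neg_one_pow: "(-1 :: real fps fps)^s = fps_const (fps_const ((-1)^s))"
  by (simp flip: fps_const_neg fps_const_power)

lemma ofnat_ff: "(of_nat q :: real fps fps) = fps_const (fps_const (real q))"
  by (simp flip: fps_of_nat)

lemma L1: "fps_nth (fps_nth (E2 (real r) * (M2 - 1)^K) b) a =
   fact K * prob_r_stirling M Ys r (a+b) K / (fact a * fact b)"
proof -
  have bin: "(M2 - 1)^K = (\<Sum>j\<le>K. fps_const (fps_const (real (K choose j) * (-1)^(K-j))) * M2^j)"
    using binomial_ring[of M2 "-1" K] by (simp add: neg_one_pow ofnat_ff mult_ac)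
  have "fps_nth (fps_nth (E2 (real r) * (M2 - 1)^K) b) a =
     (\<Sum>j\<le>K. real (K choose j) * (-1)^(K-j) * fps_nth (fps_nth (E2 (real r) * M2^j) b) a)"
    unfolding bin sum_distrib_left fps_sum_nth
    by (simp add: mult.left_commute[of "E2 (real r)"])
  also have "\<dots> = (\<Sum>j\<le>K. real (K choose j) * (-1)^(K-j) *
      integral\<^sup>L M (\<lambda>\<omega>. (partial_sum Ys j \<omega> + real r) ^ (a + b))) / (fact a * fact b)"
    by (simp add: claimBi sum_divide_distrib)
  also have "\<dots> = fact K * prob_r_stirling M Ys r (a+b) K / (fact a * fact b)"
    by (simp add: prob_r_stirling_def atLeast0AtMost)
  finally show ?thesis .
qed

end

context bellctx begin


definition Es :: "nat \<Rightarrow> real fps" where "Es r = fps_nth (E2 (real r)) 0"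
definition Phi :: "real \<Rightarrow> nat \<Rightarrow> real fps" where
  "Phi x n = (\<Sum>K\<le>n. fps_const (x^K / fact K) * (Mf - 1)^K)"

lemma M2_0: "fps_nth M2 0 = Mf" by (simp add: M2_def Mf_def)
lemma Mf1_0: "fps_nth (Mf - 1) 0 = 0" by (simp add: Mf_def mu0)

lemma L1': "fps_nth (Es r * (Mf - 1)^K) i = fact K * prob_r_stirling M Ys r i K / fact i"
proof -
  have "fps_nth (E2 (real r) * (M2 - 1)^K) 0 = Es r * (Mf - 1)^K"
    by (simp add: Es_def fps_power_zeroth M2_0)
  then show ?thesis using L1[of r K 0 i] by simp
qed

lemma S_zero: "i < K \<Longrightarrow> prob_r_stirling M Ys r i K = 0"
  using L1'[of r K i] order_zero_mult[OF Mf1_0, of i K "Es r"] by simp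

lemma L2: "i \<le> n \<Longrightarrow> fps_nth (Es r * Phi x n) i = prob_r_bell M Ys r i x / fact i"
proof -
  assume i: "i \<le> n"
  have "fps_nth (Es r * Phi x n) i = (\<Sum>K\<le>n. x^K / fact K * fps_nth (Es r * (Mf - 1)^K) i)"
    unfolding Phi_def sum_distrib_left fps_sum_nth by (simp add: mult.left_commute[of "Es r"])
  also have "\<dots> = (\<Sum>K\<le>n. prob_r_stirling M Ys r i K * x^K) / fact i"
    unfolding sum_divide_distrib L1' by (intro sum.cong refl) simp
  also have "\<dots> = (\<Sum>K=0..i. prob_r_stirling M Ys r i K * x^K) / fact i"
    using i by (intro arg_cong[where f="\<lambda>s. s / fact i"] sum.mono_neutral_right) (auto simp: S_zero)
  finally show ?thesis by (simp add: prob_r_bell_def)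
qed



definition W :: "real fps fps" where "W = M2 - fps_const Mf"

lemma W_0: "fps_nth W 0 = 0" by (simp add: W_def M2_0)
lemma W_q: "q \<ge> 1 \<Longrightarrow> fps_nth W q = fps_const (1 / fact q) * Dl q"
  by (auto simp: W_def M2_def Dl_def fps_eq_iff)

lemma E2_q: "fps_nth (E2 c) q = fps_const (c^q / fact q) * fps_nth (E2 c) 0"
  by (auto simp: E2_def fps_eq_iff power_add mult_ac)

lemma comp_empty: "j < k \<Longrightarrow> compositions k j = {}"
proof (rule ccontr)
  assume "j < k" "compositions k j \<noteq> {}"
  then obtain l where l: "l \<in> {1..k} \<rightarrow>\<^sub>E {1..j}" "(\<Sum>p\<in>{1..k}. l p) = j"
    by (auto simp: compositions_def)
  have "(\<Sum>p\<in>{1..k}. (1::nat)) \<le> (\<Sum>p\<in>{1..k}. l p)"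
    using l(1) by (intro sum_mono) auto
  then show False using l(2) \<open>j < k\<close> by simp
qed

lemma Wk_coeff: "fps_nth (fps_nth (W^k) j) b =
   (\<Sum>l\<in>compositions k j. (\<Prod>p\<in>{1..k}. 1 / fact (l p)) * integral\<^sup>L M (pt k 0 l b) / fact b)"
proof -
  have "fps_nth (W^k) j = (\<Sum>l\<in>compositions k j. \<Prod>p\<in>{1..k}. fps_nth W (l p))"
    by (rule pow_coeff_comp[OF W_0])
  also have "\<dots> = (\<Sum>l\<in>compositions k j. fps_const (\<Prod>p\<in>{1..k}. 1 / fact (l p)) * (\<Prod>p\<in>{1..k}. Dl (l p)))"
  proof (intro sum.cong refl)
    fix l assume l: "l \<in> compositions k j"
    have "(\<Prod>p\<in>{1..k}. fps_nth W (l p)) = (\<Prod>p\<in>{1..k}. fps_const (1 / fact (l p)) * Dl (l p))"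
      using l by (intro prod.cong refl W_q) (auto simp: compositions_def PiE_def Pi_def)
    also have "\<dots> = fps_const (\<Prod>p\<in>{1..k}. 1 / fact (l p)) * (\<Prod>p\<in>{1..k}. Dl (l p))"
      by (simp add: prod.distrib fps_const_prod)
    finally show "(\<Prod>p\<in>{1..k}. fps_nth W (l p)) = fps_const (\<Prod>p\<in>{1..k}. 1 / fact (l p)) * (\<Prod>p\<in>{1..k}. Dl (l p))" .
  qed
  finally have e: "fps_nth (W^k) j = (\<Sum>l\<in>compositions k j. fps_const (\<Prod>p\<in>{1..k}. 1 / fact (l p)) * (\<Prod>p\<in>{1..k}. Dl (l p)))" .
  show ?thesis unfolding e fps_sum_nth fps_mult_left_const_nth claimB by simp
qed



lemma M2m1: "M2 - 1 = W + fps_const (Mf - 1)"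
  by (simp add: W_def flip: fps_const_sub)

lemma Lcoef: "fps_nth (fps_nth (E2 c * (M2-1)^K) m) n =
   (\<Sum>k\<le>K. real (K choose k) * fps_nth (fps_nth (E2 c * W^k) m * (Mf - 1)^(K-k)) n)"
proof -
  have eq: "(M2-1)^K = (\<Sum>k\<le>K. fps_const (fps_const (real (K choose k))) * (W^k * fps_const ((Mf - 1)^(K-k))))"
    unfolding M2m1 binomial_ring by (simp add: ofnat_ff mult_ac)
  have t: "E2 c * (fps_const (fps_const C) * (W^k * fps_const P)) = fps_const (fps_const C) * ((E2 c * W^k) * fps_const P)"
    for C P k by (simp add: mult_ac)
  show ?thesis
    unfolding eq sum_distrib_left fps_sum_nth t fps_mult_left_const_nth fps_mult_right_const_nth
    by simp
qed

lemma E2W: "fps_nth (E2 c * W^k) m = (\<Sum>j\<le>m. fps_const (c^(m-j) / fact (m-j)) * (fps_nth (E2 c) 0 * fps_nth (W^k) j))"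
proof -
  have "fps_nth (E2 c * W^k) m = fps_nth (W^k * E2 c) m" by (simp add: mult.commute)
  also have "\<dots> = (\<Sum>j\<le>m. fps_nth (W^k) j * fps_nth (E2 c) (m - j))"
    by (simp add: fps_mult_nth atLeast0AtMost)
  also have "\<dots> = (\<Sum>j\<le>m. fps_const (c^(m-j) / fact (m-j)) * (fps_nth (E2 c) 0 * fps_nth (W^k) j))"
    by (intro sum.cong refl) (subst E2_q, simp add: mult_ac)
  finally show ?thesis .
qed

lemma pt0: "integral\<^sup>L M (pt k 0 l b) = integral\<^sup>L M (\<lambda>\<omega>. partial_sum Ys k \<omega> ^ b * (\<Prod>p\<in>{1..k}. Ys p \<omega> ^ l p))"
  by (simp add: pt_def[abs_def])

lemma main: "prob_r_bell M Ys r (m + n) x =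
    (\<Sum>i=0..n. \<Sum>k=0..m. real (n choose i) * prob_r_bell M Ys r i x * x ^ k * (1 / fact k) *
       (\<Sum>j=k..m. real (m choose j) *
          (\<Sum>l\<in>compositions k j. multinom j k l * real r ^ (m - j) *
             integral\<^sup>L M (\<lambda>\<omega>. partial_sum Ys k \<omega> ^ (n - i) * (\<Prod>p\<in>{1..k}. Ys p \<omega> ^ l p)))))"
  (is "_ = ?R")
proof -
  define c where "c = real r"
  define T where "T k k' = fps_nth (fps_nth (E2 c * W^k) m * (Mf - 1)^k') n" for k k'
  define g where "g k k' = x^k / fact k * (x^k' / fact k') * T k k'" for k k'
  define phi where "phi i = prob_r_bell M Ys r i x" for i
  define EE where "EE k l b = integral\<^sup>L M (\<lambda>\<omega>. partial_sum Ys k \<omega> ^ b * (\<Prod>p\<in>{1..k}. Ys p \<omega> ^ l p))" for k l b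
  have T0: "T k k' = 0" if "m < k \<or> n < k'" for k k'
    using that
  proof
    assume "m < k"
    then have "fps_nth (E2 c * W^k) m = 0" by (rule order_zero_mult[OF W_0])
    then show ?thesis by (simp add: T_def)
  next
    assume "n < k'"
    then show ?thesis unfolding T_def by (rule order_zero_mult[OF Mf1_0])
  qed
  have "prob_r_bell M Ys r (m + n) x = (\<Sum>K\<le>m+n. prob_r_stirling M Ys r (m + n) K * x^K)"
    by (simp add: prob_r_bell_def atLeast0AtMost)
  also have "\<dots> = (\<Sum>K\<le>m+n. fact m * fact n * (\<Sum>k\<le>K. g k (K - k)))"
  proof (intro sum.cong refl)
    fix K
    have "fps_nth (fps_nth (E2 c * (M2-1)^K) m) n = fact K * prob_r_stirling M Ys r (m+n) K / (fact n * fact m)"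
      using L1[of r K m n] by (simp add: c_def add.commute)
    then have "prob_r_stirling M Ys r (m+n) K = fact n * fact m / fact K * (\<Sum>k\<le>K. real (K choose k) * T k (K-k))"
      unfolding Lcoef T_def by (simp add: field_simps)
    also have "\<dots> * x^K = fact m * fact n * (\<Sum>k\<le>K. g k (K - k))"
      unfolding g_def sum_distrib_left sum_distrib_right
      by (intro sum.cong refl) (simp add: binomial_fact field_simps flip: power_add)
    finally show "prob_r_stirling M Ys r (m + n) K * x^K = fact m * fact n * (\<Sum>k\<le>K. g k (K - k))" .
  qed
  also have "\<dots> = fact m * fact n * (\<Sum>(k,k')\<in>{(i,j). i+j \<le> m+n}. g k k')"
    by (simp add: sum_distrib_left sum.triangle_reindex_eq)
  also have "(\<Sum>(k,k')\<in>{(i,j). i+j \<le> m+n}. g k k') = (\<Sum>(k,k')\<in>{..m} \<times> {..n}. g k k')"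
  proof (rule sum.mono_neutral_right)
    show "finite {(i, j). i + j \<le> m + n}"
      by (rule finite_subset[of _ "{..m+n} \<times> {..m+n}"]) auto
    show "{..m} \<times> {..n} \<subseteq> {(i, j). i + j \<le> m + n}" by auto
    have T0': "T k k' \<noteq> 0 \<Longrightarrow> k \<le> m \<and> k' \<le> n" for k k' using T0 by (meson not_le)
    show "\<forall>i\<in>{(i, j). i + j \<le> m + n} - {..m} \<times> {..n}. (case i of (k, k') \<Rightarrow> g k k') = 0"
      by (auto simp: g_def dest: T0')
  qed
  also have "\<dots> = (\<Sum>k\<le>m. \<Sum>k'\<le>n. g k k')"
    by (simp add: sum.cartesian_product)
  also have "\<dots> = (\<Sum>k\<le>m. x^k / fact k * (\<Sum>j\<le>m. c^(m-j) / fact (m-j) *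
                     (\<Sum>i\<le>n. phi i / fact i * fps_nth (fps_nth (W^k) j) (n - i))))"
  proof (intro sum.cong refl)
    fix k
    have "(\<Sum>k'\<le>n. g k k') = x^k / fact k * fps_nth (fps_nth (E2 c * W^k) m * Phi x n) n"
      unfolding g_def T_def Phi_def sum_distrib_left fps_sum_nth
      by (intro sum.cong refl) (simp add: mult.left_commute[of "fps_nth (E2 c * W ^ k) m"])
    also have "fps_nth (fps_nth (E2 c * W^k) m * Phi x n) n =
        (\<Sum>j\<le>m. c^(m-j) / fact (m-j) * fps_nth ((Es r * Phi x n) * fps_nth (W^k) j) n)"
    proof -
      have t2: "fps_const C * (A * B) * P = fps_const C * (A * P * B)" for C and A B P :: "real fps"
        by (simp add: mult_ac)
      show ?thesis
        unfolding E2W sum_distrib_right fps_sum_nth t2 fps_mult_left_const_nth by (simp add: Es_def c_def)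
    qed
    also have "\<dots> = (\<Sum>j\<le>m. c^(m-j) / fact (m-j) *
                     (\<Sum>i\<le>n. phi i / fact i * fps_nth (fps_nth (W^k) j) (n - i)))"
    proof (intro sum.cong refl)
      fix j
      show "c^(m-j) / fact (m-j) * fps_nth ((Es r * Phi x n) * fps_nth (W^k) j) n =
            c^(m-j) / fact (m-j) * (\<Sum>i\<le>n. phi i / fact i * fps_nth (fps_nth (W^k) j) (n - i))"
        unfolding fps_mult_nth[of "Es r * Phi x n"] atLeast0AtMost
        by (intro arg_cong[where f = "\<lambda>s. c^(m-j)/fact(m-j) * s"] sum.cong refl) (simp add: L2 phi_def)
    qed
    finally show "(\<Sum>k'\<le>n. g k k') = x^k / fact k * (\<Sum>j\<le>m. c^(m-j) / fact (m-j) *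
                     (\<Sum>i\<le>n. phi i / fact i * fps_nth (fps_nth (W^k) j) (n - i)))" .
  qed
  finally have LHS: "prob_r_bell M Ys r (m + n) x = fact m * fact n * (\<Sum>k\<le>m. x^k / fact k * (\<Sum>j\<le>m. c^(m-j) / fact (m-j) *
                     (\<Sum>i\<le>n. phi i / fact i * fps_nth (fps_nth (W^k) j) (n - i))))" .
  define F where "F i k j l = real (n choose i) * phi i * x ^ k * (1 / fact k) * real (m choose j) *
        (multinom j k l * real r ^ (m - j) * EE k l (n - i))" for i k j l
  have R1: "?R = (\<Sum>i\<le>n. \<Sum>k\<le>m. \<Sum>j\<le>m. \<Sum>l\<in>compositions k j. F i k j l)"
  proof (unfold atLeast0AtMost, intro sum.cong refl, goal_cases)
    case (1 i k)
    have e1: "(\<Sum>j=k..m. \<Sum>l\<in>compositions k j. F i k j l) = (\<Sum>j\<le>m. \<Sum>l\<in>compositions k j. F i k j l)"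
      by (rule sum.mono_neutral_left) (auto simp: comp_empty)
    have e2: "real (n choose i) * phi i * x ^ k * (1 / fact k) *
       (\<Sum>j=k..m. real (m choose j) *
          (\<Sum>l\<in>compositions k j. multinom j k l * real r ^ (m - j) *
             integral\<^sup>L M (\<lambda>\<omega>. partial_sum Ys k \<omega> ^ (n - i) * (\<Prod>p\<in>{1..k}. Ys p \<omega> ^ l p)))) =
       (\<Sum>j=k..m. \<Sum>l\<in>compositions k j. F i k j l)"
      unfolding F_def EE_def[symmetric] phi_def[symmetric] sum_distrib_left
      by (simp add: mult_ac)
    show ?case
      using e2 e1 by (simp add: phi_def)
  qed
  have R2: "(\<Sum>i\<le>n. \<Sum>k\<le>m. \<Sum>j\<le>m. \<Sum>l\<in>compositions k j. F i k j l) =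
            (\<Sum>k\<le>m. \<Sum>j\<le>m. \<Sum>i\<le>n. \<Sum>l\<in>compositions k j. F i k j l)"
    by (subst sum.swap) (simp add: sum.swap[of _ "{..n}"])
  have R3: "fact m * fact n * (\<Sum>k\<le>m. x^k / fact k * (\<Sum>j\<le>m. c^(m-j) / fact (m-j) *
                     (\<Sum>i\<le>n. phi i / fact i * fps_nth (fps_nth (W^k) j) (n - i)))) =
            (\<Sum>k\<le>m. \<Sum>j\<le>m. \<Sum>i\<le>n. \<Sum>l\<in>compositions k j. F i k j l)"
    unfolding Wk_coeff sum_distrib_left
  proof (intro sum.cong refl, goal_cases)
    case (1 k j i l)
    then have j: "j \<le> m" and i: "i \<le> n" by auto
    show ?case
      using j i unfolding F_def multinom_def pt0 EE_def[symmetric] c_def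
      by (simp add: binomial_fact prod_dividef field_simps)
  qed
  show ?thesis using LHS R1 R2 R3 by simp
qed

end

theorem theorem2p6:
  fixes M :: "'a measure" and Y :: "'a \<Rightarrow> real" and Ys :: "nat \<Rightarrow> 'a \<Rightarrow> real"
    and r0 :: real and r m n :: nat and x :: real
  assumes "prob_space M"
    and "Y \<in> borel_measurable M"
    and "r0 > 0"
    and "\<And>t. \<bar>t\<bar> < r0 \<Longrightarrow> integrable M (\<lambda>\<omega>. exp (t * Y \<omega>))"
    and "prob_space.indep_vars M (\<lambda>_. borel) Ys {1..}"
    and "\<And>j. j \<ge> 1 \<Longrightarrow> distr M borel (Ys j) = distr M borel Y"
    and "r > 0"
  shows "prob_r_bell M Ys r (m + n) x =
    (\<Sum>i=0..n. \<Sum>k=0..m. real (n choose i) * prob_r_bell M Ys r i x * x ^ k * (1 / fact k) *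
       (\<Sum>j=k..m. real (m choose j) *
          (\<Sum>l\<in>compositions k j. multinom j k l * real r ^ (m - j) *
             integral\<^sup>L M (\<lambda>\<omega>. partial_sum Ys k \<omega> ^ (n - i) * (\<Prod>p\<in>{1..k}. Ys p \<omega> ^ l p)))))"
proof -
  interpret bellctx M Y Ys r0
    by (rule bellctx.intro) (fact assms)+
  show ?thesis by (rule main)
qed

end
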